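(* Let $r\in\{3,5\}$, let $D=\mathrm{D}_{2r}$ be the dihedral group of order $2r$, and let $S\subseteq D$ with $S=S^{-1}$. Then there exists a nontrivial automorphism $\beta$ of $D$ that fixes $S$ setwise and inverts every element of the subgroup of order $r$ of $D$. *)

theory Defs
  imports "HOL-Algebra.Algebra"
begin

text \<open>The dihedral group of order 2r, for r \<ge> 3. The pair (k, s) stands for
  rho^k tau^s, where rho is a rotation of order r and tau a reflection with
  tau rho tau = rho^(-1). Hence (a,s)(b,t) = (a + (-1)^s b mod r, s xor t).\<close>

definition dihedral_mult :: "nat \<Rightarrow> nat \<times> bool \<Rightarrow> nat \<times> bool \<Rightarrow> nat \<times> bool" where
  "dihedral_mult r x y =
     ((if snd x then fst x + (r - fst y) else fst x + fst y) mod r, snd x \<noteq> snd y)"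

definition dihedral_group :: "nat \<Rightarrow> (nat \<times> bool) monoid" where
  "dihedral_group r = \<lparr>carrier = {0..<r} \<times> UNIV, monoid.mult = dihedral_mult r, one = (0, False)\<rparr>"

end

theory Submission
  imports Defs
begin

definition sg :: "nat \<times> bool \<Rightarrow> int" where "sg x = (if snd x then -1 else 1)"

lemma dm_fst: assumes "0 < r" "fst y < r"
  shows "int (fst (dihedral_mult r x y)) = (int (fst x) + sg x * int (fst y)) mod int r"
proof -
  have "int ((fst x + (r - fst y)) mod r) = (int (fst x) + int r - int (fst y)) mod int r"
    using assms by (simp add: of_nat_mod of_nat_diff)
  also have "\<dots> = (int (fst x) - int (fst y)) mod int r"
    by (metis add_diff_eq diff_add_eq mod_add_self2)
  finally show ?thesis using assms by (auto simp: dihedral_mult_def sg_def of_nat_mod)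
qed

lemma dm_snd: "snd (dihedral_mult r x y) = (snd x \<noteq> snd y)"
  by (simp add: dihedral_mult_def)

lemma dm_lt: "0 < r \<Longrightarrow> fst (dihedral_mult r x y) < r"
  by (simp add: dihedral_mult_def)

lemma modlem: "((a::int) + c * (b mod m)) mod m = (a + c * b) mod m"
  by (metis mod_add_right_eq mod_mult_right_eq)

lemma pair_eqI': "int (fst x) = int (fst y) \<Longrightarrow> snd x = snd y \<Longrightarrow> x = (y::nat\<times>bool)"
  by (simp add: prod_eq_iff)

lemma grp: assumes r: "0 < r" shows "group (dihedral_group r)"
proof (rule groupI)
  show "\<And>x y. x \<in> carrier (dihedral_group r) \<Longrightarrow> y \<in> carrier (dihedral_group r) \<Longrightarrow>
          x \<otimes>\<^bsub>dihedral_group r\<^esub> y \<in> carrier (dihedral_group r)"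
    using r by (auto simp: dihedral_group_def dihedral_mult_def)
  show "\<one>\<^bsub>dihedral_group r\<^esub> \<in> carrier (dihedral_group r)"
    using r by (auto simp: dihedral_group_def)
  show "\<And>x y z. x \<in> carrier (dihedral_group r) \<Longrightarrow> y \<in> carrier (dihedral_group r) \<Longrightarrow> z \<in> carrier (dihedral_group r) \<Longrightarrow>
          x \<otimes>\<^bsub>dihedral_group r\<^esub> y \<otimes>\<^bsub>dihedral_group r\<^esub> z = x \<otimes>\<^bsub>dihedral_group r\<^esub> (y \<otimes>\<^bsub>dihedral_group r\<^esub> z)"
  proof -
    fix x y z assume "x \<in> carrier (dihedral_group r)" "y \<in> carrier (dihedral_group r)" "z \<in> carrier (dihedral_group r)"
    then have c: "fst x < r" "fst y < r" "fst z < r" by (auto simp: dihedral_group_def)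
    have "sg (dihedral_mult r x y) = sg x * sg y" by (simp add: sg_def dihedral_mult_def)
    then have "int (fst (dihedral_mult r (dihedral_mult r x y) z)) = int (fst (dihedral_mult r x (dihedral_mult r y z)))"
      using r c dm_lt[OF r] by (simp add: dm_fst modlem mod_simps algebra_simps)
    then show "x \<otimes>\<^bsub>dihedral_group r\<^esub> y \<otimes>\<^bsub>dihedral_group r\<^esub> z = x \<otimes>\<^bsub>dihedral_group r\<^esub> (y \<otimes>\<^bsub>dihedral_group r\<^esub> z)"
      by (auto simp: dihedral_group_def dm_snd intro!: pair_eqI')
  qed
  show "\<And>x. x \<in> carrier (dihedral_group r) \<Longrightarrow> \<one>\<^bsub>dihedral_group r\<^esub> \<otimes>\<^bsub>dihedral_group r\<^esub> x = x"
    by (auto simp: dihedral_group_def dihedral_mult_def)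
  show "\<And>x. x \<in> carrier (dihedral_group r) \<Longrightarrow> \<exists>y\<in>carrier (dihedral_group r). y \<otimes>\<^bsub>dihedral_group r\<^esub> x = \<one>\<^bsub>dihedral_group r\<^esub>"
  proof -
    fix x assume "x \<in> carrier (dihedral_group r)"
    then obtain k s where x: "x = (k,s)" "k < r" by (auto simp: dihedral_group_def)
    show "\<exists>y\<in>carrier (dihedral_group r). y \<otimes>\<^bsub>dihedral_group r\<^esub> x = \<one>\<^bsub>dihedral_group r\<^esub>"
      apply (rule bexI[where x="if s then (k,s) else ((r-k) mod r, False)"])
      using x r by - (cases "k = 0", auto simp: dihedral_group_def dihedral_mult_def)
  qed
qed

definition beta :: "nat \<Rightarrow> nat \<Rightarrow> nat \<times> bool \<Rightarrow> nat \<times> bool" where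
  "beta r j x = ((if snd x then j + r - fst x else r - fst x) mod r, snd x)"

lemma beta_fst: assumes "0 < r" "fst x < r"
  shows "int (fst (beta r j x)) = ((if snd x then int j else 0) - int (fst x)) mod int r"
proof -
  have "int ((j + r - fst x) mod r) = (int j + int r - int (fst x)) mod int r"
    using assms by (simp add: of_nat_mod of_nat_diff)
  also have "\<dots> = (int j - int (fst x)) mod int r"
    by (metis add_diff_eq diff_add_eq mod_add_self2)
  moreover have "int ((r - fst x) mod r) = (int r - int (fst x)) mod int r"
    using assms by (simp add: of_nat_mod of_nat_diff)
  moreover have "(int r - int (fst x)) mod int r = (- int (fst x)) mod int r"
    by (metis add.commute diff_conv_add_uminus mod_add_self2)
  ultimately show ?thesis by (auto simp: beta_def)
qed

lemma beta_lt: "0 < r \<Longrightarrow> fst (beta r j x) < r" by (simp add: beta_def)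

lemma beta_hom: assumes r: "0 < r" and xy: "fst x < r" "fst y < r"
  shows "beta r j (dihedral_mult r x y) = dihedral_mult r (beta r j x) (beta r j y)"
proof (rule pair_eqI')
  show "snd (beta r j (dihedral_mult r x y)) = snd (dihedral_mult r (beta r j x) (beta r j y))"
    by (simp add: beta_def dihedral_mult_def)
  have s: "sg (beta r j x) = sg x" by (simp add: sg_def beta_def)
  show "int (fst (beta r j (dihedral_mult r x y))) = int (fst (dihedral_mult r (beta r j x) (beta r j y)))"
    using r xy dm_lt[OF r] beta_lt[OF r]
    apply (simp add: beta_fst dm_fst s dm_snd modlem mod_simps)
    apply (cases "snd x"; cases "snd y"; simp add: sg_def algebra_simps)
    done
qed

lemma beta_inv: assumes "0 < r" "fst x < r" "j < r" shows "beta r j (beta r j x) = x"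
proof (rule pair_eqI')
  show "snd (beta r j (beta r j x)) = snd x" by (simp add: beta_def)
  show "int (fst (beta r j (beta r j x))) = int (fst x)"
  proof -
    have 1: "int (fst (beta r j (beta r j x))) = ((if snd (beta r j x) then int j else 0) - int (fst (beta r j x))) mod int r"
      by (rule beta_fst[OF assms(1) beta_lt[OF assms(1)]])
    have 2: "int (fst (beta r j x)) = ((if snd x then int j else 0) - int (fst x)) mod int r"
      by (rule beta_fst[OF assms(1,2)])
    have 3: "snd (beta r j x) = snd x" by (simp add: beta_def)
    show ?thesis unfolding 1 2 3 using assms by (simp add: mod_diff_right_eq)
  qed
qed

lemma dinv: assumes r: "0 < r" and x: "x \<in> carrier (dihedral_group r)"
  shows "inv\<^bsub>dihedral_group r\<^esub> x = (if snd x then x else ((r - fst x) mod r, False))"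
proof -
  interpret group "dihedral_group r" by (rule grp[OF r])
  obtain k s where xx: "x = (k,s)" "k < r" using x by (auto simp: dihedral_group_def)
  show ?thesis
    apply (rule inv_equality)
    using xx r by - (cases "k = 0", auto simp: dihedral_group_def dihedral_mult_def)
qed

lemma main:
  fixes r :: nat and S :: "(nat \<times> bool) set"
  assumes r: "odd r" "2 < r"
    and S: "S \<subseteq> carrier (dihedral_group r)"
    and Si: "(\<lambda>x. inv\<^bsub>dihedral_group r\<^esub> x) ` S = S"
    and sym: "\<exists>j<r. \<forall>k<r. ((k,True) \<in> S) = (((j + r - k) mod r, True) \<in> S)"
  shows "\<exists>\<beta>. \<beta> \<in> iso (dihedral_group r) (dihedral_group r)
            \<and> (\<exists>x\<in>carrier (dihedral_group r). \<beta> x \<noteq> x)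
            \<and> \<beta> ` S = S
            \<and> (\<forall>H. subgroup H (dihedral_group r) \<and> card H = r \<longrightarrow> (\<forall>x\<in>H. \<beta> x = inv\<^bsub>dihedral_group r\<^esub> x))"
proof -
  define D where "D = dihedral_group r"
  have r0: "0 < r" using r by simp
  interpret group D unfolding D_def by (rule grp[OF r0])
  obtain j where j: "j < r" "\<And>k. k < r \<Longrightarrow> ((k,True) \<in> S) = (((j + r - k) mod r, True) \<in> S)"
    using sym by blast
  have car: "x \<in> carrier D \<longleftrightarrow> fst x < r" for x by (cases x) (auto simp: D_def dihedral_group_def)
  have iso: "beta r j \<in> iso D D"
    unfolding iso_def
  proof (intro CollectI conjI)
    show "beta r j \<in> hom D D"
    proof (rule homI)
      show "\<And>x. x \<in> carrier D \<Longrightarrow> beta r j x \<in> carrier D" by (simp add: car beta_lt[OF r0])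
      show "\<And>x y. x \<in> carrier D \<Longrightarrow> y \<in> carrier D \<Longrightarrow> beta r j (x \<otimes>\<^bsub>D\<^esub> y) = beta r j x \<otimes>\<^bsub>D\<^esub> beta r j y"
        by (simp add: car beta_hom[OF r0]) (simp add: D_def dihedral_group_def beta_hom[OF r0])
    qed
    show "bij_betw (beta r j) (carrier D) (carrier D)"
      by (rule bij_betw_byWitness[where f'="beta r j"]) (auto simp: car beta_lt[OF r0] beta_inv[OF r0 _ j(1)])
  qed
  have nt: "beta r j (1, False) \<noteq> (1, False)" using r by (simp add: beta_def)
  have invS: "x \<in> S \<Longrightarrow> beta r j x \<in> S" for x
  proof -
    assume xS: "x \<in> S"
    then have xc: "fst x < r" using S by (auto simp: dihedral_group_def)
    show ?thesis
    proof (cases "snd x")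
      case True
      then show ?thesis using j(2)[OF xc] xS by (cases x) (auto simp: beta_def)
    next
      case False
      have "inv\<^bsub>D\<^esub> x \<in> S" using Si xS unfolding D_def by blast
      then show ?thesis using False dinv[OF r0, of x] xc by (cases x) (auto simp: beta_def D_def dihedral_group_def)
    qed
  qed
  have imS: "beta r j ` S = S"
  proof
    show "beta r j ` S \<subseteq> S" using invS by blast
    show "S \<subseteq> beta r j ` S"
    proof
      fix x assume xS: "x \<in> S"
      then have "fst x < r" using S by (auto simp: dihedral_group_def)
      then have "x = beta r j (beta r j x)" using beta_inv[OF r0 _ j(1)] by simp
      then show "x \<in> beta r j ` S" using invS[OF xS] by blast
    qed
  qed
  have Hrot: "snd x = False" if H: "subgroup H D" "card H = r" "x \<in> H" for H x
  proof (rule ccontr)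
    assume sx: "snd x \<noteq> False"
    have xc: "x \<in> carrier D" using H subgroup.subset by blast
    define K where "K = {\<one>\<^bsub>D\<^esub>, x}"
    have xx: "x \<otimes>\<^bsub>D\<^esub> x = \<one>\<^bsub>D\<^esub>" using sx xc r0
      by (cases x) (auto simp: D_def dihedral_group_def dihedral_mult_def)
    have ix: "inv\<^bsub>D\<^esub> x = x" using dinv[OF r0, of x] xc sx by (simp add: D_def)
    have Ksub: "subgroup K D"
    proof (rule subgroupI)
      show "K \<subseteq> carrier D" "K \<noteq> {}" using xc by (auto simp: K_def)
      show "\<And>a. a \<in> K \<Longrightarrow> inv\<^bsub>D\<^esub> a \<in> K"
        unfolding K_def using ix by (elim insertE) auto
      show "\<And>a b. a \<in> K \<Longrightarrow> b \<in> K \<Longrightarrow> a \<otimes>\<^bsub>D\<^esub> b \<in> K"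
        unfolding K_def using xx xc by (elim insertE) auto
    qed
    have KH: "K \<subseteq> H" using H subgroup.one_closed by (auto simp: K_def)
    have "subgroup K (D\<lparr>carrier := H\<rparr>)" by (rule subgroup_incl[OF Ksub H(1) KH])
    moreover have g: "group (D\<lparr>carrier := H\<rparr>)" by (rule subgroup.subgroup_is_group[OF H(1) is_group])
    ultimately have "card (rcosets\<^bsub>D\<lparr>carrier := H\<rparr>\<^esub> K) * card K = order (D\<lparr>carrier := H\<rparr>)"
      using group.lagrange by blast
    moreover have "card K = 2" using sx by (cases x) (auto simp: K_def D_def dihedral_group_def)
    moreover have "order (D\<lparr>carrier := H\<rparr>) = r" using H by (simp add: order_def)
    ultimately have "even r" by (metis dvd_triv_right)
    then show False using r by simp
  qed
  show ?thesis
    unfolding D_def[symmetric]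
  proof (intro exI conjI)
    show "beta r j \<in> iso D D" by (rule iso)
    show "\<exists>x\<in>carrier D. beta r j x \<noteq> x" using nt r by (auto simp: car intro!: bexI[of _ "(1,False)"])
    show "beta r j ` S = S" by (rule imS)
    show "\<forall>H. subgroup H D \<and> card H = r \<longrightarrow> (\<forall>x\<in>H. beta r j x = inv\<^bsub>D\<^esub> x)"
    proof (intro allI impI ballI)
      fix H x assume H: "subgroup H D \<and> card H = r" and xH: "x \<in> H"
      have xc: "x \<in> carrier D" using H xH subgroup.subset by blast
      have "snd x = False" using Hrot H xH by blast
      then show "beta r j x = inv\<^bsub>D\<^esub> x" using dinv[OF r0, of x] xc by (simp add: D_def beta_def)
    qed
  qed
qed

lemma sym5: fixes S :: "(nat \<times> bool) set" shows "\<exists>j<5. \<forall>k<5. ((k,True) \<in> S) = (((j + 5 - k) mod 5, True) \<in> S)"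
proof -
  have e: "\<And>P. (\<exists>j<5::nat. P j) = (P 0 \<or> P 1 \<or> P 2 \<or> P 3 \<or> P 4)" "\<And>P. (\<forall>j<5::nat. P j) = (P 0 \<and> P 1 \<and> P 2 \<and> P 3 \<and> P 4)"
    by (auto simp: less_Suc_eq numeral_eq_Suc) 
  show ?thesis unfolding e
    by (cases "(0::nat,True) \<in> S"; cases "(1::nat,True) \<in> S"; cases "(2::nat,True) \<in> S"; cases "(3::nat,True) \<in> S"; cases "(4::nat,True) \<in> S"; simp)
qed

lemma sym3: fixes S :: "(nat \<times> bool) set" shows "\<exists>j<3. \<forall>k<3. ((k,True) \<in> S) = (((j + 3 - k) mod 3, True) \<in> S)"
proof -
  have e: "\<And>P. (\<exists>j<3::nat. P j) = (P 0 \<or> P 1 \<or> P 2)" "\<And>P. (\<forall>j<3::nat. P j) = (P 0 \<and> P 1 \<and> P 2)"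
    by (auto simp: less_Suc_eq numeral_eq_Suc) 
  show ?thesis unfolding e
    by (cases "(0::nat,True) \<in> S"; cases "(1::nat,True) \<in> S"; cases "(2::nat,True) \<in> S"; simp)
qed

theorem lemma4p9:
  fixes r :: nat and S :: "(nat \<times> bool) set"
  defines "D \<equiv> dihedral_group r"
  assumes "r \<in> {3, 5}"
    and "S \<subseteq> carrier D"
    and "(\<lambda>x. inv\<^bsub>D\<^esub> x) ` S = S"
  shows "\<exists>\<beta>. \<beta> \<in> iso D D
            \<and> (\<exists>x\<in>carrier D. \<beta> x \<noteq> x)
            \<and> \<beta> ` S = S
            \<and> (\<forall>H. subgroup H D \<and> card H = r \<longrightarrow> (\<forall>x\<in>H. \<beta> x = inv\<^bsub>D\<^esub> x))"
  unfolding D_def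
proof (rule main)
  show "odd r" "2 < r" using assms(2) by auto
  show "S \<subseteq> carrier (dihedral_group r)" "(\<lambda>x. inv\<^bsub>dihedral_group r\<^esub> x) ` S = S"
    using assms(3,4) by (simp_all add: D_def)
  show "\<exists>j<r. \<forall>k<r. ((k,True) \<in> S) = (((j + r - k) mod r, True) \<in> S)"
    using assms(2) sym3 sym5 by auto
qed

end
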